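(* Let $p, m$ be positive integers with $m \le p$, let $\eta > 0$, let $F_{\mathrm{new}}, F_{\mathrm{old}} \in \mathbb{R}^{p\times p}$ be symmetric positive definite matrices, let $g \in \mathbb{R}^p$, and let $G = [g_1,\ldots,g_m] \in \mathbb{R}^{p\times m}$ have full column rank. For $u, w \in \mathbb{R}^p$ write $\|w\|_{F_{\mathrm{new}}} = \sqrt{w^\top F_{\mathrm{new}} w}$. Consider the constrained problem $$\min_{u\in\mathbb{R}^p} \ \| g - F_{\mathrm{new}}^{-1} u\|_{F_{\mathrm{new}}}^2 \quad \text{subject to} \quad F_{\mathrm{old}}^{-1} u \in \operatorname{Col}(G),$$ let $u^*$ be a minimizer, and suppose $c>0$ is such that $v^* = c\,F_{\mathrm{new}}^{-1}(g-u^* )$ satisfies $\|v^*\|_{F_{\mathrm{new}}} = \eta$ (this $v^*$ is called the FOPNG update). Then $$v^* = \eta\,\frac{F_{\mathrm{new}}^{-1} P g}{\sqrt{g^\top P^\top F_{\mathrm{new}}^{-1} P g}},$$ where $$P = I - F_{\mathrm{old}} G\left(G^\top F_{\mathrm{old}} F_{\mathrm{new}}^{-1} F_{\mathrm{old}} G\right)^{-1} G^\top F_{\mathrm{old}}.$$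
   Context: In the paper's setting, $\theta\in\mathbb{R}^p$ are model parameters, $g$ is the gradient of the new-task loss, the columns of $G$ are stored gradients from previous tasks, and $F_{\mathrm{new}}$, $F_{\mathrm{old}}$ are Fisher information matrices $\mathbb{E}_{x}\mathbb{E}_{y\sim p_\theta(\cdot|x)}[\nabla_\theta \log p_\theta(y|x)\nabla_\theta \log p_\theta(y|x)^\top]$ computed on new-task and previous-task data respectively. The paper's regularity assumptions are: the score function exists with finite second moments, $F_{\mathrm{new}}$ is positive definite, and $G$ has full column rank. $\operatorname{Col}(G)$ denotes the column space of $G$. *)

theory Defs
  imports "HOL-Analysis.Analysis"
begin

definition spd :: "real^'n^'n \<Rightarrow> bool" where
  "spd F \<longleftrightarrow> transpose F = F \<and> (\<forall>x. x \<noteq> 0 \<longrightarrow> x \<bullet> (F *v x) > 0)"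

definition fnorm :: "real^'n^'n \<Rightarrow> real^'n \<Rightarrow> real" where
  "fnorm F w = sqrt (w \<bullet> (F *v w))"

definition colspace :: "real^'m^'p \<Rightarrow> (real^'p) set" where
  "colspace G = range (\<lambda>a. G *v a)"

end

theory Submission
  imports Defs
begin

declare transpose_matrix_vector[simp del]

lemma minv_props:
  fixes A :: "real^'n^'n"
  assumes "invertible A"
  shows "A ** matrix_inv A = mat 1" "matrix_inv A ** A = mat 1"
proof -
  have "\<exists>A'. A ** A' = mat 1 \<and> A' ** A = mat 1" using assms unfolding invertible_def by blast
  hence "A ** matrix_inv A = mat 1 \<and> matrix_inv A ** A = mat 1"
    unfolding matrix_inv_def by (rule someI_ex)
  thus "A ** matrix_inv A = mat 1" "matrix_inv A ** A = mat 1" by auto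
qed

lemma minv_vec:
  fixes A :: "real^'n^'n"
  assumes "invertible A"
  shows "A *v (matrix_inv A *v x) = x" "matrix_inv A *v (A *v x) = x"
  by (simp_all add: matrix_vector_mul_assoc minv_props[OF assms])

lemma ker_invertible:
  fixes A :: "real^'n^'n"
  assumes "\<And>x. A *v x = 0 \<Longrightarrow> x = 0"
  shows "invertible A"
  using assms matrix_left_invertible_ker invertible_left_inverse by blast

lemma spd_invertible:
  assumes "spd F" shows "invertible F"
proof (rule ker_invertible)
  fix x assume "F *v x = 0"
  thus "x = 0" using assms unfolding spd_def by force
qed

lemma dot_transp: "(x::real^'n) \<bullet> (A *v y) = (transpose A *v x) \<bullet> y"
proof -
  have "transpose A *v x = x v* A"
    using vector_transpose_matrix[of x "transpose A"] by simp
  thus ?thesis by (simp add: dot_lmul_matrix)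
qed

lemma dot_sym: "transpose A = A \<Longrightarrow> (x::real^'n) \<bullet> (A *v y) = (A *v x) \<bullet> y"
  using dot_transp[of x A y] by simp

lemma spd_inv_sym:
  assumes "spd F" shows "transpose (matrix_inv F) = matrix_inv F"
proof -
  have i: "invertible F" using spd_invertible assms .
  have t: "transpose F = F" using assms spd_def by blast
  have "transpose (matrix_inv F) ** F = transpose (F ** matrix_inv F)"
    by (simp add: matrix_transpose_mul t)
  hence "transpose (matrix_inv F) ** F = mat 1"
    by (simp add: minv_props[OF i] transpose_mat)
  hence "transpose (matrix_inv F) = transpose (matrix_inv F) ** (F ** matrix_inv F)"
    by (simp add: minv_props[OF i])
  also have "\<dots> = matrix_inv F"
    by (simp add: matrix_mul_assoc \<open>transpose (matrix_inv F) ** F = mat 1\<close>)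
  finally show ?thesis .
qed

lemma spd_inv_pos:
  assumes "spd F" "y \<noteq> 0" shows "y \<bullet> (matrix_inv F *v y) > 0"
proof -
  have i: "invertible F" using spd_invertible assms(1) .
  define z where "z = matrix_inv F *v y"
  have y: "y = F *v z" unfolding z_def using minv_vec[OF i] by simp
  have "z \<noteq> 0" using y assms(2) by auto
  hence "z \<bullet> (F *v z) > 0" using assms(1) unfolding spd_def by blast
  moreover have "y \<bullet> (matrix_inv F *v y) = z \<bullet> (F *v z)"
    unfolding z_def[symmetric] by (subst (1) y) (simp add: inner_commute)
  ultimately show ?thesis by simp
qed

theorem theorem3:
  fixes Fnew Fold :: "real^'p^'p" and g ustar vstar :: "real^'p"
    and G :: "real^'m^'p" and \<eta> c :: real
  assumes "CARD('m) \<le> CARD('p)"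
    and "\<eta> > 0"
    and "spd Fnew" and "spd Fold"
    and "rank G = CARD('m)"
    and "matrix_inv Fold *v ustar \<in> colspace G"
    and "\<forall>u. matrix_inv Fold *v u \<in> colspace G \<longrightarrow>
           (fnorm Fnew (g - matrix_inv Fnew *v ustar))\<^sup>2 \<le> (fnorm Fnew (g - matrix_inv Fnew *v u))\<^sup>2"
    and "c > 0"
    and "vstar = c *\<^sub>R (matrix_inv Fnew *v (g - ustar))"
    and "fnorm Fnew vstar = \<eta>"
  shows "let P = mat 1 - Fold ** G **
                   matrix_inv (transpose G ** Fold ** matrix_inv Fnew ** Fold ** G) **
                   transpose G ** Fold
         in vstar = (\<eta> / sqrt (g \<bullet> (transpose P ** matrix_inv Fnew ** P *v g)))
                      *\<^sub>R (matrix_inv Fnew ** P *v g)"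
proof -
  define N where "N = Fnew"
  define Ni where "Ni = matrix_inv Fnew"
  define B where "B = Fold ** G"
  define M where "M = transpose G ** Fold ** matrix_inv Fnew ** Fold ** G"
  define Mi where "Mi = matrix_inv M"
  have iN: "invertible N" using spd_invertible assms(3) N_def by simp
  have iF: "invertible Fold" using spd_invertible[OF assms(4)] .
  have tN: "transpose N = N" using assms(3) N_def spd_def by blast
  have tF: "transpose Fold = Fold" using assms(4) spd_def by blast
  have tNi: "transpose Ni = Ni" using spd_inv_sym assms(3) Ni_def by simp
  have NiN: "\<And>x. Ni *v (N *v x) = x" "\<And>x. N *v (Ni *v x) = x"
    using minv_vec[OF iN] N_def Ni_def by auto
  have FiF: "\<And>x. matrix_inv Fold *v (Fold *v x) = x" "\<And>x. Fold *v (matrix_inv Fold *v x) = x"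
    using minv_vec[OF iF] by auto
  have injG: "inj ((*v) G)" using full_rank_injective assms(5) by blast
  have tB: "transpose B = transpose G ** Fold" using tF B_def by (simp add: matrix_transpose_mul)
  have MB: "M = transpose B ** Ni ** B" unfolding tB unfolding M_def B_def Ni_def by (simp add: matrix_mul_assoc)
  have Bker: "\<And>x. B *v x = 0 \<Longrightarrow> x = 0"
  proof -
    fix x assume "B *v x = 0"
    hence "Fold *v (G *v x) = 0" by (simp add: B_def matrix_vector_mul_assoc)
    hence "G *v x = 0" by (metis FiF(1) matrix_vector_mult_0_right)
    thus "x = 0" using injG by (metis injD matrix_vector_mult_0_right)
  qed
  have iM: "invertible M"
  proof (rule ker_invertible)
    fix x assume "M *v x = 0"
    hence "x \<bullet> (M *v x) = 0" by simp
    moreover have "x \<bullet> (M *v x) = x \<bullet> (transpose B *v (Ni *v (B *v x)))"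
      by (simp add: MB matrix_vector_mul_assoc matrix_mul_assoc)
    moreover have "\<dots> = (B *v x) \<bullet> (Ni *v (B *v x))"
      using dot_transp[of x "transpose B"] by simp
    ultimately show "x = 0" using spd_inv_pos[OF assms(3), of "B *v x"] Bker Ni_def by force
  qed
  define astar where "astar = Mi *v (transpose B *v g)"
  define u1 where "u1 = B *v astar"
  have Mastar: "M *v astar = transpose B *v g"
    unfolding astar_def Mi_def using minv_vec[OF iM] by simp
  define w where "w = g - Ni *v u1"
  have Btw: "transpose B *v w = 0"
  proof -
    have "transpose B *v (Ni *v u1) = M *v astar"
      by (simp add: u1_def MB matrix_vector_mul_assoc matrix_mul_assoc)
    thus ?thesis by (simp add: w_def matrix_vector_mult_diff_distrib Mastar)
  qed
  have u1c: "matrix_inv Fold *v u1 \<in> colspace G"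
    unfolding colspace_def u1_def B_def by (simp add: matrix_vector_mul_assoc[symmetric] FiF)
  obtain a0 where a0: "matrix_inv Fold *v ustar = G *v a0"
    using assms(6) unfolding colspace_def by auto
  have us: "ustar = B *v a0" using a0 FiF(2)[of ustar] by (simp add: B_def matrix_vector_mul_assoc[symmetric])
  define x where "x = ustar - u1"
  have xB: "x = B *v (a0 - astar)" by (simp add: x_def us u1_def matrix_vector_mult_diff_distrib)
  have xw: "x \<bullet> w = 0"
    using dot_transp[of w B "a0 - astar"] Btw by (simp add: xB inner_commute)
  have obj: "\<And>y. (fnorm Fnew (w - Ni *v y))\<^sup>2 = w \<bullet> (N *v w) - 2 * (y \<bullet> w) + y \<bullet> (Ni *v y)"
  proof -
    fix y
    have nn: "0 \<le> (w - Ni *v y) \<bullet> (N *v (w - Ni *v y))"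
      using assms(3) N_def unfolding spd_def
      by (metis inner_zero_left order.strict_implies_order order_refl)
    have e1: "(Ni *v y) \<bullet> (N *v w) = y \<bullet> w"
      by (metis dot_sym NiN(1) tN tNi)
    have e2: "w \<bullet> (N *v (Ni *v y)) = y \<bullet> w" using NiN(2) by (simp add: inner_commute)
    have e3: "(Ni *v y) \<bullet> (N *v (Ni *v y)) = y \<bullet> (Ni *v y)" using NiN(2) by (simp add: inner_commute)
    show "(fnorm Fnew (w - Ni *v y))\<^sup>2 = w \<bullet> (N *v w) - 2 * (y \<bullet> w) + y \<bullet> (Ni *v y)"
      unfolding fnorm_def using nn
      by (simp add: N_def[symmetric] matrix_vector_mult_diff_distrib inner_diff_left inner_diff_right e1 e2 e3)
  qed
  have "(fnorm Fnew (g - Ni *v ustar))\<^sup>2 \<le> (fnorm Fnew (g - Ni *v u1))\<^sup>2"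
    using assms(7) u1c Ni_def by blast
  moreover have "g - Ni *v ustar = w - Ni *v x"
    by (simp add: w_def x_def matrix_vector_mult_diff_distrib)
  moreover have "g - Ni *v u1 = w - Ni *v 0" by (simp add: w_def)
  ultimately have "x \<bullet> (Ni *v x) \<le> 0" using obj[of x] obj[of 0] xw by (simp add: inner_commute)
  hence x0: "x = 0" using spd_inv_pos[OF assms(3), of x] Ni_def by force
  define P where "P = mat 1 - Fold ** G **
                   matrix_inv (transpose G ** Fold ** matrix_inv Fnew ** Fold ** G) **
                   transpose G ** Fold"
  have Pg: "P *v g = g - ustar"
  proof -
    have "P = mat 1 - B ** Mi ** transpose B"
      unfolding tB unfolding P_def B_def Mi_def M_def by (simp add: matrix_mul_assoc)
    hence "P *v g = g - B *v (Mi *v (transpose B *v g))"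
      by (simp add: matrix_vector_mult_diff_rdistrib matrix_vector_mul_assoc matrix_mul_assoc)
    thus ?thesis using x0 by (simp add: x_def u1_def astar_def)
  qed
  define y where "y = Ni *v (g - ustar)"
  have vs: "vstar = c *\<^sub>R y" using assms(9) y_def Ni_def by simp
  define q where "q = g \<bullet> (transpose P ** matrix_inv Fnew ** P *v g)"
  have q: "q = (g - ustar) \<bullet> y"
    unfolding q_def y_def Ni_def
    by (simp add: matrix_vector_mul_assoc[symmetric] dot_transp Pg)
  have yNy: "y \<bullet> (N *v y) = q"
    using q NiN(2) y_def by (simp add: inner_commute)
  have "vstar \<bullet> (N *v vstar) = c\<^sup>2 * q"
    by (simp add: vs matrix_vector_mult_scaleR yNy power2_eq_square)
  hence "fnorm Fnew vstar = c * sqrt q"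
    unfolding fnorm_def N_def[symmetric]
    using assms(8) by (simp add: real_sqrt_mult)
  hence cq: "c * sqrt q = \<eta>" using assms(10) by simp
  hence "sqrt q \<noteq> 0" using assms(2) by auto
  hence "c = \<eta> / sqrt q" using cq by (simp add: field_simps)
  moreover have "matrix_inv Fnew ** P *v g = y"
    by (simp add: y_def Ni_def matrix_vector_mul_assoc[symmetric] Pg)
  ultimately show ?thesis unfolding Let_def P_def[symmetric] q_def[symmetric] using vs by simp
qed

end
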